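(* Let $n\in\mathbb{N}$ and let $\sigma$ be a probability distribution on $[n]$ such that $\sigma_{\le i}>\tfrac in$ for every $i\in[n-1]$, and let $\pi=\bigotimes_{i=1}^{n-1}\mathrm{Geom}\big(1-\frac{i}{n\sigma_{\le i}}\big)$. For $(\vec d,i)\in\mathbb{N}_0^{n-1}\times[n]$ let $\nu(\vec d,i)$ be the probability that the transitional state $(\vec d,i)$ occurs during one transition according to $P$ started from $\vec d_{\mathrm{start}}\sim\pi$. Then \[\nu(\vec d,i)=\pi(\vec d)\cdot\sigma_{\le i}\quad\text{for all }(\vec d,i)\in\mathbb{N}_0^{n-1}\times[n].\]
   Context: For a probability distribution $\sigma$ on $[n]$ write $\sigma_i=\Pr_{i^*\sim\sigma}[i^*=i]$ and $\sigma_{\le i}=\Pr_{i^*\sim\sigma}[i^*\le i]$. $\mathrm{Geom}(p)$ is the number of failed independent Bernoulli($p$) trials before the first success (support $\mathbb{N}_0$); $\bigotimes$ is the product of independent distributions, and $\pi(\vec d)$ is the probability mass at $\vec d$. Let $\vec e_i$ be the $i$-th unit vector in $\mathbb{N}_0^{n-1}$ for $i\in[n-1]$, with conventions $d_n=\infty$, $\vec e_n=\vec0$. A transition according to $P$ from a state $\vec d_{\mathrm{start}}\in\mathbb{N}_0^{n-1}$ passes through transitional states $(\vec d,i)\in\mathbb{N}_0^{n-1}\times[n]$: (1) sample $i^*\sim\sigma$ and go to $(\vec d_{\mathrm{start}},i^* )$. (2) While in $(\vec d,i)$: if $d_i>0$, then with probability $(i-1)/i$ move to $(\vec d-\vec e_i+\vec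 e_{i-1},i)$ and with probability $1/i$ end the transition in state $\vec d-\vec e_i$; if $d_i=0$, move to $(\vec d,i+1)$. *)

theory Defs
  imports "HOL-Probability.Probability"
begin

text \<open>States d in N0^(n-1) are encoded as functions nat => nat, with
  coordinates 1..n-1 meaningful (all other coordinates 0 for the stationary
  distribution). Transitional states (d,i) are Trans d i; the end of a
  transition in state d is Final d (absorbing).\<close>

datatype tstate = Trans "nat \<Rightarrow> nat" nat | Final "nat \<Rightarrow> nat"

definition sig_le :: "nat pmf \<Rightarrow> nat \<Rightarrow> real" where
  "sig_le \<sigma> i = measure_pmf.prob \<sigma> {..i}"

definition geom_param :: "nat \<Rightarrow> nat pmf \<Rightarrow> nat \<Rightarrow> real" where
  "geom_param n \<sigma> i = 1 - real i / (real n * sig_le \<sigma> i)"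

definition pi_dist :: "nat \<Rightarrow> nat pmf \<Rightarrow> (nat \<Rightarrow> nat) pmf" where
  "pi_dist n \<sigma> = Pi_pmf {1..<n} 0 (\<lambda>i. geometric_pmf (geom_param n \<sigma> i))"

text \<open>One step between transitional states (d_n = infinity, e_n = 0).\<close>
definition step :: "nat \<Rightarrow> tstate \<Rightarrow> tstate pmf" where
  "step n s = (case s of
      Final d \<Rightarrow> return_pmf (Final d)
    | Trans d i \<Rightarrow>
        (if i = n then
           map_pmf (\<lambda>b. if b then Final d else Trans (d(n - 1 := Suc (d (n - 1)))) n)
             (bernoulli_pmf (1 / real i))
         else if d i > 0 then
           map_pmf (\<lambda>b. if b then Final (d(i := d i - 1))
                         else Trans ((d(i := d i - 1))(i - 1 := Suc (d (i - 1)))) i)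
             (bernoulli_pmf (1 / real i))
         else return_pmf (Trans d (Suc i))))"

definition init_dist :: "nat \<Rightarrow> nat pmf \<Rightarrow> tstate pmf" where
  "init_dist n \<sigma> = bind_pmf (pi_dist n \<sigma>) (\<lambda>d. map_pmf (Trans d) \<sigma>)"

primrec path_dist :: "nat \<Rightarrow> nat pmf \<Rightarrow> nat \<Rightarrow> tstate list pmf" where
  "path_dist n \<sigma> 0 = map_pmf (\<lambda>x. [x]) (init_dist n \<sigma>)"
| "path_dist n \<sigma> (Suc k) =
     bind_pmf (path_dist n \<sigma> k) (\<lambda>xs. map_pmf (\<lambda>y. xs @ [y]) (step n (last xs)))"

text \<open>nu(d,i): probability that the transitional state (d,i) occurs during the
  transition, i.e. the limit (supremum) of the probabilities of the increasing
  events "(d,i) occurs among the first k+1 states".\<close>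
definition nu :: "nat \<Rightarrow> nat pmf \<Rightarrow> (nat \<Rightarrow> nat) \<Rightarrow> nat \<Rightarrow> real" where
  "nu n \<sigma> d i = (SUP k. measure_pmf.prob (path_dist n \<sigma> k) {xs. Trans d i \<in> set xs})"

end

theory Submission
  imports Defs
begin

definition mu :: "nat \<Rightarrow> nat pmf \<Rightarrow> nat \<Rightarrow> tstate pmf" where
  "mu n \<sigma> t = map_pmf last (path_dist n \<sigma> t)"

lemma mu_0: "mu n \<sigma> 0 = init_dist n \<sigma>"
  by (simp add: mu_def pmf.map_comp o_def)

lemma mu_Suc: "mu n \<sigma> (Suc t) = bind_pmf (mu n \<sigma> t) (step n)"
  by (simp add: mu_def map_bind_pmf bind_map_pmf pmf.map_comp o_def)

lemma butlast_path: "map_pmf butlast (path_dist n \<sigma> (Suc k)) = path_dist n \<sigma> k"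
  by (simp add: map_bind_pmf pmf.map_comp o_def bind_return_pmf' flip: return_pmf_def)

lemma bern_map:
  assumes "A \<noteq> B" "0 \<le> p" "p \<le> 1"
  shows "pmf (map_pmf (\<lambda>b. if b then A else B) (bernoulli_pmf p)) x =
     (if x = A then p else 0) + (if x = B then 1 - p else 0)"
proof -
  have "pmf (map_pmf (\<lambda>b. if b then A else B) (bernoulli_pmf p)) x
     = measure_pmf.prob (bernoulli_pmf p) ((\<lambda>b. if b then A else B) -` {x})" by (simp add: pmf_map)
  also have "(\<lambda>b. if b then A else B) -` {x} = (if x = A then {True} else {}) \<union> (if x = B then {False} else {})"
    using assms(1) by (auto split: if_splits)
  finally show ?thesis using assms by (auto simp: measure_pmf_single)
qed

definition goodst :: "nat \<Rightarrow> tstate \<Rightarrow> bool" where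
  "goodst n y = (case y of Trans _ j \<Rightarrow> 1 \<le> j \<and> j \<le> n | Final _ \<Rightarrow> True)"

definition R :: "nat \<Rightarrow> tstate \<Rightarrow> tstate \<Rightarrow> bool" where
  "R n x y = (case y of Final _ \<Rightarrow> True | Trans d' i' \<Rightarrow>
      (case x of Final _ \<Rightarrow> False | Trans d i \<Rightarrow>
         i < i' \<or> (i = i' \<and> (if i = n then d (n - 1) < d' (n - 1) else d' i < d i))))"

lemma R_trans: "transp (R n)"
  unfolding transp_def R_def by (auto split: tstate.splits if_splits)

lemma step_set:
  assumes "y \<in> set_pmf (step n x)" "goodst n x"
  shows "goodst n y \<and> R n x y"
  using assms unfolding step_def goodst_def R_def
  by (auto split: tstate.splits if_splits)

lemma init_set:
  assumes "set_pmf \<sigma> \<subseteq> {1..n}" "y \<in> set_pmf (init_dist n \<sigma>)"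
  shows "goodst n y"
  using assms unfolding init_dist_def goodst_def by auto

lemma path_inv:
  assumes "set_pmf \<sigma> \<subseteq> {1..n}" "xs \<in> set_pmf (path_dist n \<sigma> k)"
  shows "xs \<noteq> [] \<and> (\<forall>x\<in>set xs. goodst n x) \<and> sorted_wrt (R n) xs"
  using assms(2)
proof (induction k arbitrary: xs)
  case 0
  then show ?case using init_set[OF assms(1)] by auto
next
  case (Suc k)
  then obtain ys y where ys: "ys \<in> set_pmf (path_dist n \<sigma> k)" "y \<in> set_pmf (step n (last ys))"
    and xs: "xs = ys @ [y]" by auto
  from Suc.IH[OF ys(1)] have ih: "ys \<noteq> []" "\<forall>x\<in>set ys. goodst n x" "sorted_wrt (R n) ys" by auto
  have gl: "goodst n (last ys)" using ih by auto
  from step_set[OF ys(2) gl] have yy: "goodst n y" "R n (last ys) y" by auto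
  have "\<forall>x\<in>set ys. R n x y"
  proof
    fix x assume x: "x \<in> set ys"
    show "R n x y"
    proof (cases "x = last ys")
      case True then show ?thesis using yy by simp
    next
      case False
      have "ys = butlast ys @ [last ys]" using ih by simp
      then have "sorted_wrt (R n) (butlast ys @ [last ys])" using ih by metis
      moreover have "x \<in> set (butlast ys)" using x False
        by (metis \<open>ys = butlast ys @ [last ys]\<close> rotate1.simps(2) set_ConsD set_rotate1)
      ultimately have "R n x (last ys)" by (auto simp: sorted_wrt_append)
      then show ?thesis using yy R_trans[of n] by (meson transpD)
    qed
  qed
  then show ?case using xs ih yy by (auto simp: sorted_wrt_append)
qed

lemma mu_set:
  assumes "set_pmf \<sigma> \<subseteq> {1..n}" "y \<in> set_pmf (mu n \<sigma> t)"
  shows "goodst n y"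
  using assms path_inv[OF assms(1)] unfolding mu_def by auto

lemma R_irrefl: "\<not> R n (Trans d i) (Trans d i)"
  unfolding R_def by auto

lemma P_Suc:
  assumes "set_pmf \<sigma> \<subseteq> {1..n}"
  shows "measure_pmf.prob (path_dist n \<sigma> (Suc k)) {xs. Trans d i \<in> set xs} =
     measure_pmf.prob (path_dist n \<sigma> k) {xs. Trans d i \<in> set xs} + pmf (mu n \<sigma> (Suc k)) (Trans d i)"
proof -
  let ?s = "Trans d i"
  let ?M = "path_dist n \<sigma> (Suc k)"
  define A where "A = {xs. ?s \<in> set (butlast xs)}"
  define B where "B = {xs. last xs = ?s}"
  have eq: "{xs. ?s \<in> set xs} \<inter> set_pmf ?M = (A \<union> B) \<inter> set_pmf ?M"
  proof (intro equalityI subsetI)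
    fix xs assume xs: "xs \<in> {xs. ?s \<in> set xs} \<inter> set_pmf ?M"
    then have "xs \<noteq> []" using path_inv[OF assms] by blast
    then have "xs = butlast xs @ [last xs]" by simp
    then have "?s \<in> set (butlast xs) \<or> ?s = last xs" using xs
      by (metis IntD1 Un_iff empty_iff empty_set list.simps(15) mem_Collect_eq set_append singleton_iff)
    then show "xs \<in> (A \<union> B) \<inter> set_pmf ?M" using xs A_def B_def by auto
  next
    fix xs assume xs: "xs \<in> (A \<union> B) \<inter> set_pmf ?M"
    then have "xs \<noteq> []" using path_inv[OF assms] by blast
    then show "xs \<in> {xs. ?s \<in> set xs} \<inter> set_pmf ?M" using xs A_def B_def
      by (auto dest: in_set_butlastD)
  qed
  have disj: "(B \<inter> A) \<inter> set_pmf ?M = {}"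
  proof (rule ccontr)
    assume "(B \<inter> A) \<inter> set_pmf ?M \<noteq> {}"
    then obtain xs where xs: "xs \<in> set_pmf ?M" "last xs = ?s" "?s \<in> set (butlast xs)"
      using A_def B_def by auto
    have inv: "xs \<noteq> []" "sorted_wrt (R n) xs" using path_inv[OF assms xs(1)] by auto
    then have "sorted_wrt (R n) (butlast xs @ [last xs])" by simp
    then have "R n ?s (last xs)" using xs(3) by (auto simp: sorted_wrt_append)
    then show False using xs(2) R_irrefl by metis
  qed
  have "measure_pmf.prob ?M {xs. ?s \<in> set xs} = measure_pmf.prob ?M (A \<union> B)"
    by (metis eq measure_Int_set_pmf)
  also have "\<dots> = measure_pmf.prob ?M A + measure_pmf.prob ?M (B - A)"
    by (rule measure_pmf.finite_measure_Union') auto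
  also have "measure_pmf.prob ?M (B - A) = measure_pmf.prob ?M B - measure_pmf.prob ?M (B \<inter> A)"
    by (rule measure_pmf.finite_measure_Diff') auto
  also have "measure_pmf.prob ?M (B \<inter> A) = 0"
    using disj by (simp add: measure_pmf_zero_iff Int_commute)
  also have "measure_pmf.prob ?M A = measure_pmf.prob (map_pmf butlast ?M) {xs. ?s \<in> set xs}"
    by (simp add: measure_map_pmf A_def vimage_def)
  also have "\<dots> = measure_pmf.prob (path_dist n \<sigma> k) {xs. ?s \<in> set xs}"
    by (simp only: butlast_path)
  also have "measure_pmf.prob ?M B = pmf (mu n \<sigma> (Suc k)) ?s"
    by (simp add: mu_def pmf_map B_def vimage_def)
  finally show ?thesis by simp
qed

lemma P_sum:
  assumes "set_pmf \<sigma> \<subseteq> {1..n}"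
  shows "measure_pmf.prob (path_dist n \<sigma> k) {xs. Trans d i \<in> set xs} =
     (\<Sum>t<Suc k. pmf (mu n \<sigma> t) (Trans d i))"
proof (induction k)
  case 0
  have "measure_pmf.prob (path_dist n \<sigma> 0) {xs. Trans d i \<in> set xs}
      = measure_pmf.prob (init_dist n \<sigma>) {Trans d i}"
    by (simp add: measure_map_pmf vimage_def)
  then show ?case by (simp add: mu_0 measure_pmf_single)
next
  case (Suc k)
  then show ?case using P_Suc[OF assms] by simp
qed

lemma mu_summable:
  assumes "set_pmf \<sigma> \<subseteq> {1..n}"
  shows "summable (\<lambda>t. pmf (mu n \<sigma> t) (Trans d i))"
proof (rule summableI_nonneg_bounded[where x=1])
  fix m
  show "(\<Sum>t<m. pmf (mu n \<sigma> t) (Trans d i)) \<le> 1"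
  proof (cases m)
    case 0 then show ?thesis by simp
  next
    case (Suc k)
    then show ?thesis using P_sum[OF assms, of k d i] measure_pmf.prob_le_1 by (metis)
  qed
qed simp

lemma nu_eq:
  assumes "set_pmf \<sigma> \<subseteq> {1..n}"
  shows "nu n \<sigma> d i = (\<Sum>t. pmf (mu n \<sigma> t) (Trans d i))"
proof -
  let ?f = "\<lambda>t. pmf (mu n \<sigma> t) (Trans d i)"
  let ?X = "\<lambda>k. measure_pmf.prob (path_dist n \<sigma> k) {xs. Trans d i \<in> set xs}"
  have X: "?X = (\<lambda>k. sum ?f {..<Suc k})" using P_sum[OF assms] by auto
  have inc: "incseq ?X" unfolding X
    by (intro incseq_SucI) (simp del: sum.lessThan_Suc add: sum.lessThan_Suc[of _ "Suc _"])
  have bdd: "bdd_above (range ?X)"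
    by (intro bdd_aboveI[where M=1]) auto
  have l1: "?X \<longlonglongrightarrow> (SUP k. ?X k)" by (rule LIMSEQ_incseq_SUP[OF bdd inc])
  have l2: "?X \<longlonglongrightarrow> suminf ?f" unfolding X
    using summable_LIMSEQ[OF mu_summable[OF assms]] by (rule LIMSEQ_Suc)
  show ?thesis unfolding nu_def using LIMSEQ_unique[OF l1 l2] by simp
qed

definition pred :: "nat \<Rightarrow> (nat \<Rightarrow> nat) \<Rightarrow> nat \<Rightarrow> nat \<Rightarrow> nat" where
  "pred n d i = (if i = n then d(n - 1 := d (n - 1) - 1) else (d(i - 1 := d (i - 1) - 1))(i := Suc (d i)))"

definition c1 :: "(nat \<Rightarrow> nat) \<Rightarrow> nat \<Rightarrow> real" where
  "c1 d i = (if 2 \<le> i \<and> d (i - 1) = 0 then 1 else 0)"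

definition c2 :: "(nat \<Rightarrow> nat) \<Rightarrow> nat \<Rightarrow> real" where
  "c2 d i = (if 2 \<le> i \<and> 1 \<le> d (i - 1) then 1 - 1 / real i else 0)"

lemma step_pmf:
  assumes "goodst n y" "1 \<le> i" "i \<le> n"
  shows "pmf (step n y) (Trans d i) =
    c1 d i * indicator {Trans d (i - 1)} y + c2 d i * indicator {Trans (pred n d i) i} y"
proof (cases y)
  case (Final e)
  then show ?thesis by (simp add: step_def)
next
  case (Trans e j)
  have j: "1 \<le> j" "j \<le> n" using assms(1) Trans by (auto simp: goodst_def)
  have ne: "Trans d (i - 1) \<noteq> Trans (pred n d i) i" using assms by auto
  show ?thesis
  proof (cases "j = n")
    case True
    have "pmf (step n y) (Trans d i) =
       (if Trans d i = Trans (e(n - 1 := Suc (e (n - 1)))) n then 1 - 1 / real n else 0)"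
      using Trans True j by (simp add: step_def bern_map)
    also have "\<dots> = c1 d i * indicator {Trans d (i - 1)} y + c2 d i * indicator {Trans (pred n d i) i} y"
    proof (cases "i = n \<and> d = e(n - 1 := Suc (e (n - 1)))")
      case True2: True
      then show ?thesis using Trans True j
        by (auto simp: c1_def c2_def pred_def indicator_def)
    next
      case False
      have "\<not> (2 \<le> i \<and> 1 \<le> d (i - 1) \<and> Trans (pred n d i) i = Trans e j)"
      proof
        assume h: "2 \<le> i \<and> 1 \<le> d (i - 1) \<and> Trans (pred n d i) i = Trans e j"
        then have ie: "i = n" "e = d(n - 1 := d (n - 1) - 1)" using True by (auto simp: pred_def)
        have "d = e(n - 1 := Suc (e (n - 1)))"
        proof
          fix x show "d x = (e(n - 1 := Suc (e (n - 1)))) x" using ie h by (cases "x = n - 1") auto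
        qed
        then show False using False ie by blast
      qed
      then show ?thesis using Trans True j False assms
        by (auto simp: c1_def c2_def indicator_def)
    qed
    finally show ?thesis .
  next
    case False
    show ?thesis
    proof (cases "e j > 0")
      case True
      have "pmf (step n y) (Trans d i) =
         (if Trans d i = Trans ((e(j := e j - 1))(j - 1 := Suc (e (j - 1)))) j then 1 - 1 / real j else 0)"
        using Trans True False j by (simp add: step_def bern_map)
      also have "\<dots> = c1 d i * indicator {Trans d (i - 1)} y + c2 d i * indicator {Trans (pred n d i) i} y"
      proof (cases "i = j \<and> d = (e(j := e j - 1))(j - 1 := Suc (e (j - 1)))")
        case True2: True
        show ?thesis
        proof (cases "i = 1")
          case True
          then show ?thesis using True2 Trans by (auto simp: c1_def c2_def indicator_def)
        next
          case i1: False
          have "e = pred n d i" using True2 i1 j False True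
            by (auto simp: pred_def fun_eq_iff)
          then show ?thesis using True2 Trans i1 j True
            by (auto simp: c1_def c2_def indicator_def)
        qed
      next
        case False2: False
        have "\<not> (2 \<le> i \<and> 1 \<le> d (i - 1) \<and> Trans (pred n d i) i = Trans e j)"
        proof
          assume h: "2 \<le> i \<and> 1 \<le> d (i - 1) \<and> Trans (pred n d i) i = Trans e j"
          then have "i = j" "e = (d(i - 1 := d (i - 1) - 1))(i := Suc (d i))" using False
            by (auto simp: pred_def)
          then have ie: "i = j" "e = (d(i - 1 := d (i - 1) - 1))(i := Suc (d i))" .
          have "d = (e(j := e j - 1))(j - 1 := Suc (e (j - 1)))"
          proof
            fix x show "d x = ((e(j := e j - 1))(j - 1 := Suc (e (j - 1)))) x" using ie h
              by (cases "x = j - 1"; cases "x = j") auto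
          qed
          then show False using False2 ie by blast
        qed
        moreover have "\<not> (Trans d (i - 1) = y \<and> d (i - 1) = 0)" using Trans True by auto
        ultimately show ?thesis using Trans False2
          by (auto simp: c1_def c2_def indicator_def)
      qed
      finally show ?thesis .
    next
      case False2: False
      have "pmf (step n y) (Trans d i) = (if Trans d i = Trans e (Suc j) then 1 else 0)"
        using Trans False2 False j by (auto simp add: step_def pmf_return indicator_def)
      also have "\<dots> = c1 d i * indicator {Trans d (i - 1)} y + c2 d i * indicator {Trans (pred n d i) i} y"
        using Trans False2 False j assms
        by (auto simp: c1_def c2_def indicator_def pred_def)
      finally show ?thesis .
    qed
  qed
qed

lemma mu_Suc_pmf:
  assumes "set_pmf \<sigma> \<subseteq> {1..n}" "1 \<le> i" "i \<le> n"
  shows "pmf (mu n \<sigma> (Suc t)) (Trans d i) =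
    c1 d i * pmf (mu n \<sigma> t) (Trans d (i - 1)) + c2 d i * pmf (mu n \<sigma> t) (Trans (pred n d i) i)"
proof -
  let ?M = "mu n \<sigma> t"
  have "pmf (mu n \<sigma> (Suc t)) (Trans d i) = measure_pmf.expectation ?M (\<lambda>y. pmf (step n y) (Trans d i))"
    by (simp add: mu_Suc pmf_bind)
  also have "\<dots> = measure_pmf.expectation ?M (\<lambda>y.
      c1 d i * indicator {Trans d (i - 1)} y + c2 d i * indicator {Trans (pred n d i) i} y)"
  proof (rule integral_cong_AE)
    show "AE y in measure_pmf ?M. pmf (step n y) (Trans d i) =
      c1 d i * indicator {Trans d (i - 1)} y + c2 d i * indicator {Trans (pred n d i) i} y"
      unfolding AE_measure_pmf_iff using step_pmf[OF mu_set[OF assms(1)] assms(2,3)] by blast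
  qed auto
  also have "\<dots> = c1 d i * measure_pmf.expectation ?M (indicator {Trans d (i - 1)})
     + c2 d i * measure_pmf.expectation ?M (indicator {Trans (pred n d i) i})"
    by (subst Bochner_Integration.integral_add) (auto intro!: integrable_real_indicator simp: measure_pmf.emeasure_finite less_top[symmetric])
  also have "\<dots> = c1 d i * pmf ?M (Trans d (i - 1)) + c2 d i * pmf ?M (Trans (pred n d i) i)"
    by (simp add: measure_pmf_single)
  finally show ?thesis .
qed

lemma mu0_pmf: "pmf (mu n \<sigma> 0) (Trans d i) = pmf (pi_dist n \<sigma>) d * pmf \<sigma> i"
proof -
  have "init_dist n \<sigma> = map_pmf (\<lambda>(d, i). Trans d i) (pair_pmf (pi_dist n \<sigma>) \<sigma>)"
    by (simp add: init_dist_def pair_pmf_def map_bind_pmf bind_return_pmf map_pmf_def[symmetric] pmf.map_comp o_def)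
  moreover have "inj (\<lambda>(d, i). Trans d i)" by (auto simp: inj_def)
  ultimately have "pmf (init_dist n \<sigma>) ((\<lambda>(d, i). Trans d i) (d, i)) = pmf (pair_pmf (pi_dist n \<sigma>) \<sigma>) (d, i)"
    by (simp only: pmf_map_inj')
  then show ?thesis by (simp add: mu_0 pmf_pair)
qed

definition g :: "nat \<Rightarrow> nat pmf \<Rightarrow> (nat \<Rightarrow> nat) \<Rightarrow> nat \<Rightarrow> real" where
  "g n \<sigma> d i = (\<Sum>t. pmf (mu n \<sigma> t) (Trans d i))"

lemma g_rec:
  assumes "set_pmf \<sigma> \<subseteq> {1..n}" "1 \<le> i" "i \<le> n"
  shows "g n \<sigma> d i = pmf (pi_dist n \<sigma>) d * pmf \<sigma> i + c1 d i * g n \<sigma> d (i - 1) + c2 d i * g n \<sigma> (pred n d i) i"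
proof -
  let ?f = "\<lambda>t. pmf (mu n \<sigma> t) (Trans d i)"
  let ?a = "\<lambda>t. pmf (mu n \<sigma> t) (Trans d (i - 1))"
  let ?b = "\<lambda>t. pmf (mu n \<sigma> t) (Trans (pred n d i) i)"
  have sa: "summable ?a" and sb: "summable ?b" and sf: "summable ?f"
    using mu_summable[OF assms(1)] by blast+
  have "g n \<sigma> d i = ?f 0 + (\<Sum>t. ?f (Suc t))"
    unfolding g_def using suminf_split_head[OF sf] by simp
  also have "(\<Sum>t. ?f (Suc t)) = (\<Sum>t. c1 d i * ?a t + c2 d i * ?b t)"
    using mu_Suc_pmf[OF assms] by simp
  also have "\<dots> = c1 d i * suminf ?a + c2 d i * suminf ?b"
    using sa sb by (simp add: suminf_add[symmetric] suminf_mult summable_mult)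
  finally show ?thesis by (simp add: g_def mu0_pmf)
qed

locale setting =
  fixes n :: nat and \<sigma> :: "nat pmf"
  assumes n1: "n \<ge> 1"
    and supp: "set_pmf \<sigma> \<subseteq> {1..n}"
    and sig: "\<forall>j\<in>{1..<n}. sig_le \<sigma> j > real j / real n"
begin

abbreviation "S \<equiv> sig_le \<sigma>"
definition "p j = real j / (real n * S j)"

lemma S0: "S 0 = 0"
proof -
  have "S 0 = pmf \<sigma> 0" by (simp add: sig_le_def measure_pmf_single)
  also have "\<dots> = 0" using supp by (auto simp: set_pmf_iff)
  finally show ?thesis .
qed

lemma S_Suc: "S (Suc k) = S k + pmf \<sigma> (Suc k)"
proof -
  have "{..Suc k} = {..k} \<union> {Suc k}" by auto
  then have "S (Suc k) = measure_pmf.prob \<sigma> ({..k} \<union> {Suc k})" by (simp add: sig_le_def)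
  also have "\<dots> = S k + pmf \<sigma> (Suc k)"
    by (subst measure_pmf.finite_measure_Union) (auto simp: sig_le_def measure_pmf_single)
  finally show ?thesis .
qed

lemma Sn: "S n = 1"
proof -
  have "S n = measure_pmf.prob \<sigma> ({..n} \<inter> set_pmf \<sigma>)" by (simp add: sig_le_def measure_Int_set_pmf)
  also have "{..n} \<inter> set_pmf \<sigma> = UNIV \<inter> set_pmf \<sigma>" using supp by auto
  also have "measure_pmf.prob \<sigma> (UNIV \<inter> set_pmf \<sigma>) = 1"
    by (simp only: measure_Int_set_pmf) (metis measure_pmf.prob_space space_measure_pmf)
  finally show ?thesis .
qed

lemma Spos: "j \<in> {1..<n} \<Longrightarrow> S j > 0"
  using sig by (smt (verit, best) divide_nonneg_nonneg of_nat_0_le_iff)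

lemma p_bounds: "j \<in> {1..<n} \<Longrightarrow> 0 < p j \<and> p j < 1"
proof -
  assume j: "j \<in> {1..<n}"
  have S: "S j > 0" "S j > real j / real n" using Spos[OF j] sig j by auto
  have n: "real n > 0" using j by auto
  have "0 < p j" using S n j unfolding p_def by (auto intro!: divide_pos_pos)
  moreover have "real j < real n * S j" using S(2) n by (simp add: field_simps)
  then have "p j < 1" unfolding p_def using S n by (simp add: field_simps)
  ultimately show ?thesis by simp
qed

lemma pmf_geo: "j \<in> {1..<n} \<Longrightarrow> pmf (geometric_pmf (geom_param n \<sigma> j)) k = p j ^ k * (1 - p j)"
proof -
  assume j: "j \<in> {1..<n}"
  have gp: "geom_param n \<sigma> j = 1 - p j" by (simp add: geom_param_def p_def)
  show ?thesis using p_bounds[OF j] by (simp add: gp pmf_geometric)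
qed

lemma pi_upd:
  assumes a: "a \<in> {1..<n}"
  shows "pmf (pi_dist n \<sigma>) (d(a := v)) * p a ^ d a = pmf (pi_dist n \<sigma>) d * p a ^ v"
proof (cases "\<forall>x. x \<notin> {1..<n} \<longrightarrow> d x = 0")
  case True
  let ?A = "{1..<n}"
  let ?F = "\<lambda>x k. pmf (geometric_pmf (geom_param n \<sigma> x)) k"
  have T2: "\<forall>x. x \<notin> ?A \<longrightarrow> (d(a := v)) x = 0" using True a by auto
  have e1: "pmf (pi_dist n \<sigma>) (d(a := v)) = ?F a v * (\<Prod>x\<in>?A - {a}. ?F x (d x))"
  proof -
    have "pmf (pi_dist n \<sigma>) (d(a := v)) = (\<Prod>x\<in>?A. ?F x ((d(a := v)) x))"
      unfolding pi_dist_def using T2 by (subst pmf_Pi) auto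
    also have "\<dots> = ?F a ((d(a := v)) a) * (\<Prod>x\<in>?A - {a}. ?F x ((d(a := v)) x))"
      by (rule prod.remove) (use a in auto)
    also have "(\<Prod>x\<in>?A - {a}. ?F x ((d(a := v)) x)) = (\<Prod>x\<in>?A - {a}. ?F x (d x))"
      by (rule prod.cong) auto
    finally show ?thesis by (simp only: fun_upd_same)
  qed
  have e2: "pmf (pi_dist n \<sigma>) d = ?F a (d a) * (\<Prod>x\<in>?A - {a}. ?F x (d x))"
  proof -
    have "pmf (pi_dist n \<sigma>) d = (\<Prod>x\<in>?A. ?F x (d x))"
      unfolding pi_dist_def using True by (subst pmf_Pi) auto
    also have "\<dots> = ?F a (d a) * (\<Prod>x\<in>?A - {a}. ?F x (d x))"
      by (rule prod.remove) (use a in auto)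
    finally show ?thesis .
  qed
  show ?thesis unfolding e1 e2 using a by (simp add: pmf_geo power_add[symmetric] algebra_simps)
next
  case False
  then have F2: "\<not> (\<forall>x. x \<notin> {1..<n} \<longrightarrow> (d(a := v)) x = 0)" using a by auto
  have "pmf (pi_dist n \<sigma>) (d(a := v)) = 0" "pmf (pi_dist n \<sigma>) d = 0"
    unfolding pi_dist_def using False F2 by (auto intro!: pmf_Pi_outside)
  then show ?thesis by simp
qed

lemma ratio:
  assumes i: "2 \<le> i" "i \<le> n" and dpos: "1 \<le> d (i - 1)"
  shows "c2 d i * pmf (pi_dist n \<sigma>) (pred n d i) * S i = pmf (pi_dist n \<sigma>) d * S (i - 1)"
proof -
  let ?\<pi> = "pmf (pi_dist n \<sigma>)"
  have a: "i - 1 \<in> {1..<n}" using i by auto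
  have pa: "0 < p (i - 1)" using p_bounds[OF a] by simp
  have Sa: "S (i - 1) > 0" using Spos[OF a] .
  have c2: "c2 d i = 1 - 1 / real i" using i dpos by (simp add: c2_def)
  define d1 where "d1 = d(i - 1 := d (i - 1) - 1)"
  have r1: "?\<pi> d1 * p (i - 1) = ?\<pi> d"
  proof -
    have "?\<pi> d1 * p (i - 1) ^ d (i - 1) = ?\<pi> d * p (i - 1) ^ (d (i - 1) - 1)"
      unfolding d1_def by (rule pi_upd[OF a])
    moreover have "p (i - 1) ^ d (i - 1) = p (i - 1) ^ (d (i - 1) - 1) * p (i - 1)"
      using dpos by (metis Suc_diff_le diff_Suc_1 power_Suc2)
    ultimately show ?thesis using pa by (simp add: field_simps)
  qed
  show ?thesis
  proof (cases "i = n")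
    case True
    have pr: "pred n d i = d1" using True by (simp add: pred_def d1_def)
    have "c2 d i * ?\<pi> (pred n d i) * S i * p (i - 1) = ?\<pi> d * S (i - 1) * p (i - 1)"
      using r1 True i Sa unfolding pr c2 by (simp add: Sn p_def field_simps of_nat_diff)
    then show ?thesis using pa by simp
  next
    case False
    then have ia: "i \<in> {1..<n}" using i by auto
    have pb: "0 < p i" using p_bounds[OF ia] by simp
    have Sb: "S i > 0" using Spos[OF ia] .
    have "d1 i = d i" using i by (simp add: d1_def)
    then have pr: "pred n d i = d1(i := Suc (d1 i))" using False by (simp add: pred_def d1_def)
    have r2: "?\<pi> (pred n d i) = ?\<pi> d1 * p i"
    proof -
      have "?\<pi> (d1(i := Suc (d1 i))) * p i ^ d1 i = ?\<pi> d1 * p i ^ Suc (d1 i)"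
        by (rule pi_upd[OF ia])
      then show ?thesis unfolding pr using pb by simp
    qed
    have pS: "p j * S j = real j / real n" if "j \<in> {1..<n}" for j
      using Spos[OF that] that unfolding p_def by (simp add: field_simps)
    have "c2 d i * ?\<pi> (pred n d i) * S i = (1 - 1 / real i) * ?\<pi> d1 * (p i * S i)"
      unfolding c2 r2 by (simp add: algebra_simps)
    also have "\<dots> = (1 - 1 / real i) * ?\<pi> d1 * (real i / real n)" using pS[OF ia] by simp
    also have "\<dots> = ?\<pi> d1 * (real (i - 1) / real n)" using i by (simp add: field_simps of_nat_diff)
    also have "\<dots> = ?\<pi> d1 * (p (i - 1) * S (i - 1))" using pS[OF a] by simp
    also have "\<dots> = ?\<pi> d * S (i - 1)" using r1 by (simp add: algebra_simps)
    finally show ?thesis .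
  qed
qed

lemma g_formula:
  assumes "1 \<le> i" "i \<le> n"
  shows "g n \<sigma> d i = pmf (pi_dist n \<sigma>) d * S i"
  using assms
proof (induction i arbitrary: d)
  case 0 then show ?case by simp
next
  case (Suc k)
  note kp = Suc.prems and kIH = Suc.IH
  show ?case
  proof (cases "k = 0")
    case True
    then show ?thesis using g_rec[OF supp Suc.prems, of d] by (simp add: c1_def c2_def S_Suc S0)
  next
    case False
    have "\<forall>d::nat\<Rightarrow>nat. d k = m \<longrightarrow> g n \<sigma> d (Suc k) = pmf (pi_dist n \<sigma>) d * S (Suc k)" for m
    proof (induction m)
      case 0
      show ?case
      proof (intro allI impI)
        fix d :: "nat \<Rightarrow> nat" assume d: "d k = 0"
        have "g n \<sigma> d (Suc k) = pmf (pi_dist n \<sigma>) d * pmf \<sigma> (Suc k) + g n \<sigma> d k"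
          using g_rec[OF supp kp, of d] False d by (simp add: c1_def c2_def)
        also have "g n \<sigma> d k = pmf (pi_dist n \<sigma>) d * S k"
          using kIH False kp by simp
        finally show "g n \<sigma> d (Suc k) = pmf (pi_dist n \<sigma>) d * S (Suc k)"
          by (simp add: S_Suc algebra_simps)
      qed
    next
      case (Suc m)
      show ?case
      proof (intro allI impI)
        fix d :: "nat \<Rightarrow> nat" assume d: "d k = Suc m"
        have pk: "pred n d (Suc k) k = m" using d kp by (auto simp add: pred_def)
        have "g n \<sigma> d (Suc k) = pmf (pi_dist n \<sigma>) d * pmf \<sigma> (Suc k)
            + c2 d (Suc k) * g n \<sigma> (pred n d (Suc k)) (Suc k)"
          using g_rec[OF supp kp, of d] False d by (simp add: c1_def)
        also have "g n \<sigma> (pred n d (Suc k)) (Suc k) = pmf (pi_dist n \<sigma>) (pred n d (Suc k)) * S (Suc k)"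
          using Suc.IH pk by blast
        also have "c2 d (Suc k) * (pmf (pi_dist n \<sigma>) (pred n d (Suc k)) * S (Suc k)) = pmf (pi_dist n \<sigma>) d * S k"
          using ratio[of "Suc k" d] False kp d by (simp add: mult.assoc)
        finally show "g n \<sigma> d (Suc k) = pmf (pi_dist n \<sigma>) d * S (Suc k)"
          by (simp add: S_Suc algebra_simps)
      qed
    qed
    then show ?thesis by blast
  qed
qed

end

theorem lemma7:
  fixes n :: nat and \<sigma> :: "nat pmf" and d :: "nat \<Rightarrow> nat" and i :: nat
  assumes "n \<ge> 1"
    and "set_pmf \<sigma> \<subseteq> {1..n}"
    and "\<forall>j\<in>{1..<n}. sig_le \<sigma> j > real j / real n"
    and "\<forall>j. j \<notin> {1..<n} \<longrightarrow> d j = 0"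
    and "i \<in> {1..n}"
  shows "nu n \<sigma> d i = pmf (pi_dist n \<sigma>) d * sig_le \<sigma> i"
proof -
  interpret setting n \<sigma> using assms(1-3) by unfold_locales
  show ?thesis using nu_eq[OF assms(2)] g_formula[of i d] assms(5) by (simp add: g_def)
qed

end
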